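(* Let $\mathbf P=(P,\leq,{}',0,1)$ be a finite orthomodular poset which is not a lattice. Then its Dedekind-MacNeille completion $\mathrm{DM}(\mathbf P)$ is not orthomodular.
   Context: For $M\subseteq P$, $U(M)$, $L(M)$ are the sets of upper and lower bounds. A poset with complementation is a bounded poset with antitone involution $'$ ($x\le y\Rightarrow y'\le x'$, $x''=x$) with $L(\{x,x'\})=\{0\}$, $U(\{x,x'\})=\{1\}$. It is an orthomodular poset if for all $x\le y'$ the join $x\vee y$ exists and $((x\vee y)\wedge y')\vee y= x\vee y$ whenever defined (with $x\wedge y=(x'\vee y')'$). The Dedekind-MacNeille completion $\mathrm{DM}(\mathbf P)$ is the complete lattice of subsets $B\subseteq P$ with $L(U(B))=B$ under inclusion, with antitone involution $X'=L(\{u'\mid u\in X\})$; a lattice with complementation is orthomodular if $x\vee y=((x\vee y)\wedge y')\vee y$ for all $x,y$. *)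

theory Defs
  imports Main
begin

definition lowerB :: "'a set \<Rightarrow> ('a \<Rightarrow> 'a \<Rightarrow> bool) \<Rightarrow> 'a set \<Rightarrow> 'a set" where
  "lowerB P le M = {x \<in> P. \<forall>m\<in>M. le x m}"

definition upperB :: "'a set \<Rightarrow> ('a \<Rightarrow> 'a \<Rightarrow> bool) \<Rightarrow> 'a set \<Rightarrow> 'a set" where
  "upperB P le M = {x \<in> P. \<forall>m\<in>M. le m x}"

definition is_lub :: "'a set \<Rightarrow> ('a \<Rightarrow> 'a \<Rightarrow> bool) \<Rightarrow> 'a set \<Rightarrow> 'a \<Rightarrow> bool" where
  "is_lub P le M j \<longleftrightarrow> j \<in> upperB P le M \<and> (\<forall>u\<in>upperB P le M. le j u)"

definition is_glb :: "'a set \<Rightarrow> ('a \<Rightarrow> 'a \<Rightarrow> bool) \<Rightarrow> 'a set \<Rightarrow> 'a \<Rightarrow> bool" where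
  "is_glb P le M m \<longleftrightarrow> m \<in> lowerB P le M \<and> (\<forall>l\<in>lowerB P le M. le l m)"

definition lub :: "'a set \<Rightarrow> ('a \<Rightarrow> 'a \<Rightarrow> bool) \<Rightarrow> 'a set \<Rightarrow> 'a" where
  "lub P le M = (THE j. is_lub P le M j)"

definition glb :: "'a set \<Rightarrow> ('a \<Rightarrow> 'a \<Rightarrow> bool) \<Rightarrow> 'a set \<Rightarrow> 'a" where
  "glb P le M = (THE m. is_glb P le M m)"

definition partial_order_on' :: "'a set \<Rightarrow> ('a \<Rightarrow> 'a \<Rightarrow> bool) \<Rightarrow> bool" where
  "partial_order_on' P le \<longleftrightarrow>
     (\<forall>x\<in>P. le x x) \<and>
     (\<forall>x\<in>P. \<forall>y\<in>P. le x y \<and> le y x \<longrightarrow> x = y) \<and>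
     (\<forall>x\<in>P. \<forall>y\<in>P. \<forall>z\<in>P. le x y \<and> le y z \<longrightarrow> le x z)"

definition poset_with_complementation ::
  "'a set \<Rightarrow> ('a \<Rightarrow> 'a \<Rightarrow> bool) \<Rightarrow> ('a \<Rightarrow> 'a) \<Rightarrow> 'a \<Rightarrow> 'a \<Rightarrow> bool" where
  "poset_with_complementation P le c zero one \<longleftrightarrow>
     partial_order_on' P le \<and> zero \<in> P \<and> one \<in> P \<and>
     (\<forall>x\<in>P. le zero x \<and> le x one) \<and>
     (\<forall>x\<in>P. c x \<in> P) \<and>
     (\<forall>x\<in>P. \<forall>y\<in>P. le x y \<longrightarrow> le (c y) (c x)) \<and>
     (\<forall>x\<in>P. c (c x) = x) \<and>
     (\<forall>x\<in>P. lowerB P le {x, c x} = {zero} \<and> upperB P le {x, c x} = {one})"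

text \<open>Orthomodular poset: for x \<le> y' the join x \<or> y exists, and
  ((x \<or> y) \<and> y') \<or> y = x \<or> y whenever defined, where a \<and> b = (a' \<or> b')'.\<close>
definition orthomodular_poset ::
  "'a set \<Rightarrow> ('a \<Rightarrow> 'a \<Rightarrow> bool) \<Rightarrow> ('a \<Rightarrow> 'a) \<Rightarrow> 'a \<Rightarrow> 'a \<Rightarrow> bool" where
  "orthomodular_poset P le c zero one \<longleftrightarrow>
     poset_with_complementation P le c zero one \<and>
     (\<forall>x\<in>P. \<forall>y\<in>P. le x (c y) \<longrightarrow>
        (\<exists>j. is_lub P le {x, y} j) \<and>
        (\<forall>j m k. is_lub P le {x, y} j \<longrightarrow> is_lub P le {c j, c (c y)} m \<longrightarrow>
                 is_lub P le {c m, y} k \<longrightarrow> k = j))"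

definition is_lattice :: "'a set \<Rightarrow> ('a \<Rightarrow> 'a \<Rightarrow> bool) \<Rightarrow> bool" where
  "is_lattice P le \<longleftrightarrow>
     (\<forall>x\<in>P. \<forall>y\<in>P. (\<exists>j. is_lub P le {x, y} j) \<and> (\<exists>m. is_glb P le {x, y} m))"

definition DM_carrier :: "'a set \<Rightarrow> ('a \<Rightarrow> 'a \<Rightarrow> bool) \<Rightarrow> 'a set set" where
  "DM_carrier P le = {B. B \<subseteq> P \<and> lowerB P le (upperB P le B) = B}"

definition DM_comp :: "'a set \<Rightarrow> ('a \<Rightarrow> 'a \<Rightarrow> bool) \<Rightarrow> ('a \<Rightarrow> 'a) \<Rightarrow> 'a set \<Rightarrow> 'a set" where
  "DM_comp P le c X = lowerB P le (c ` X)"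

definition orthomodular_lattice :: "'b set \<Rightarrow> ('b \<Rightarrow> 'b \<Rightarrow> bool) \<Rightarrow> ('b \<Rightarrow> 'b) \<Rightarrow> bool" where
  "orthomodular_lattice C le c \<longleftrightarrow>
     (\<forall>x\<in>C. \<forall>y\<in>C. lub C le {x, y} = lub C le {glb C le {lub C le {x, y}, c y}, y})"

end

theory Submission
  imports Defs
begin

lemma the_lub_sub: "is_lub C (\<subseteq>) M j \<Longrightarrow> lub C (\<subseteq>) M = j"
  unfolding lub_def
  by (rule the_equality) (auto simp: is_lub_def upperB_def intro: subset_antisym)

lemma the_glb_sub: "is_glb C (\<subseteq>) M j \<Longrightarrow> glb C (\<subseteq>) M = j"
  unfolding glb_def
  by (rule the_equality) (auto simp: is_glb_def lowerB_def intro: subset_antisym)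

lemma LUL: "lowerB P le (upperB P le (lowerB P le (upperB P le S))) = lowerB P le (upperB P le S)"
proof
  have "upperB P le S \<subseteq> upperB P le (lowerB P le (upperB P le S))"
    unfolding lowerB_def upperB_def by blast
  then show "lowerB P le (upperB P le (lowerB P le (upperB P le S))) \<subseteq> lowerB P le (upperB P le S)"
    unfolding lowerB_def by blast
  show "lowerB P le (upperB P le S) \<subseteq> lowerB P le (upperB P le (lowerB P le (upperB P le S)))"
    unfolding lowerB_def upperB_def by blast
qed

lemma LUL2: "T \<subseteq> P \<Longrightarrow> lowerB P le (upperB P le (lowerB P le T)) = lowerB P le T"
proof
  assume "T \<subseteq> P"
  then have "T \<subseteq> upperB P le (lowerB P le T)"
    unfolding lowerB_def upperB_def by blast
  then show "lowerB P le (upperB P le (lowerB P le T)) \<subseteq> lowerB P le T"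
    unfolding lowerB_def by blast
  show "lowerB P le T \<subseteq> lowerB P le (upperB P le (lowerB P le T))"
    unfolding lowerB_def upperB_def by blast
qed

theorem corollary2:
  fixes P :: "'a set" and le :: "'a \<Rightarrow> 'a \<Rightarrow> bool" and c :: "'a \<Rightarrow> 'a" and zero one :: 'a
  assumes "finite P"
    and "orthomodular_poset P le c zero one"
    and "\<not> is_lattice P le"
  shows "\<not> orthomodular_lattice (DM_carrier P le) (\<subseteq>) (DM_comp P le c)"
proof
  assume oml: "orthomodular_lattice (DM_carrier P le) (\<subseteq>) (DM_comp P le c)"
  have pc: "poset_with_complementation P le c zero one"
    using assms(2) unfolding orthomodular_poset_def by blast
  have refl: "\<And>x. x \<in> P \<Longrightarrow> le x x"
    and anti: "\<And>x y. x \<in> P \<Longrightarrow> y \<in> P \<Longrightarrow> le x y \<Longrightarrow> le y x \<Longrightarrow> x = y"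
    and trans: "\<And>x y z. x \<in> P \<Longrightarrow> y \<in> P \<Longrightarrow> z \<in> P \<Longrightarrow> le x y \<Longrightarrow> le y z \<Longrightarrow> le x z"
    using pc unfolding poset_with_complementation_def partial_order_on'_def by blast+
  have zP: "zero \<in> P" and oP: "one \<in> P" and bnd: "\<And>x. x \<in> P \<Longrightarrow> le zero x \<and> le x one"
    and cP: "\<And>x. x \<in> P \<Longrightarrow> c x \<in> P"
    and anton: "\<And>x y. x \<in> P \<Longrightarrow> y \<in> P \<Longrightarrow> le x y \<Longrightarrow> le (c y) (c x)"
    and inv: "\<And>x. x \<in> P \<Longrightarrow> c (c x) = x"
    and compl: "\<And>x. x \<in> P \<Longrightarrow> lowerB P le {x, c x} = {zero}"
    using pc unfolding poset_with_complementation_def by blast+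
  have joinex: "\<And>x y. x \<in> P \<Longrightarrow> y \<in> P \<Longrightarrow> le x (c y) \<Longrightarrow> \<exists>j. is_lub P le {x, y} j"
    using assms(2) unfolding orthomodular_poset_def by blast
  have anton2: "\<And>x y. x \<in> P \<Longrightarrow> y \<in> P \<Longrightarrow> le x (c y) \<Longrightarrow> le y (c x)"
    by (metis anton cP inv)
  obtain a b where aP: "a \<in> P" and bP: "b \<in> P" and nolub: "\<not> (\<exists>j. is_lub P le {a, b} j)"
  proof -
    obtain x y where xP: "x \<in> P" and yP: "y \<in> P" and
      nx: "\<not> (\<exists>j. is_lub P le {x, y} j) \<or> \<not> (\<exists>m. is_glb P le {x, y} m)"
      using assms(3) unfolding is_lattice_def by blast
    show ?thesis
    proof (cases "\<exists>j. is_lub P le {x, y} j")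
      case False then show ?thesis using that xP yP by blast
    next
      case True
      with nx have ng: "\<not> (\<exists>m. is_glb P le {x, y} m)" by blast
      have "\<not> (\<exists>j. is_lub P le {c x, c y} j)"
      proof
        assume "\<exists>j. is_lub P le {c x, c y} j"
        then obtain j where j: "is_lub P le {c x, c y} j" by blast
        have jP: "j \<in> P" and j1: "le (c x) j" and j2: "le (c y) j"
          and jl: "\<And>w. w \<in> P \<Longrightarrow> le (c x) w \<Longrightarrow> le (c y) w \<Longrightarrow> le j w"
          using j unfolding is_lub_def upperB_def by auto
        have "is_glb P le {x, y} (c j)"
          unfolding is_glb_def lowerB_def
        proof (intro conjI ballI CollectI)
          show "c j \<in> P" using cP jP .
          fix m assume "m \<in> {x, y}"
          then show "le (c j) m"
            using anton[OF cP[OF xP] jP j1] anton[OF cP[OF yP] jP j2] inv xP yP by auto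
        next
          fix l assume "l \<in> {l \<in> P. \<forall>m\<in>{x, y}. le l m}"
          then have lP: "l \<in> P" and "le l x" "le l y" by auto
          then have "le (c x) (c l)" "le (c y) (c l)" using anton xP yP by auto
          then have "le j (c l)" using jl cP lP by blast
          then show "le l (c j)" using anton2 lP jP by blast
        qed
        with ng show False by blast
      qed
      then show ?thesis using that cP xP yP by blast
    qed
  qed
  define L where "L = lowerB P le"
  define U where "U = upperB P le"
  define S where "S = U {a, b}"
  have oS: "one \<in> S" unfolding S_def U_def upperB_def using oP aP bP bnd by auto
  obtain u where uS: "u \<in> S" and umin: "\<And>w. w \<in> S \<Longrightarrow> card (L {w}) \<ge> card (L {u})"
    using ex_has_least_nat[of "\<lambda>w. w \<in> S" one "\<lambda>w. card (L {w})", OF oS] by blast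
  have uP: "u \<in> P" and au: "le a u" and bu: "le b u" using uS unfolding S_def U_def upperB_def by auto
  have umin2: "\<And>w. w \<in> S \<Longrightarrow> le w u \<Longrightarrow> w = u"
  proof (rule ccontr)
    fix w assume wS: "w \<in> S" and wu: "le w u" and ne: "w \<noteq> u"
    have wP: "w \<in> P" using wS unfolding S_def U_def upperB_def by auto
    have "L {w} \<subset> L {u}"
    proof
      show "L {w} \<subseteq> L {u}" unfolding L_def lowerB_def using trans wP uP wu by blast
      have "u \<in> L {u}" unfolding L_def lowerB_def using uP refl by auto
      moreover have "u \<notin> L {w}" unfolding L_def lowerB_def using anti wP uP wu ne by auto
      ultimately show "L {w} \<noteq> L {u}" by blast
    qed
    then have "card (L {w}) < card (L {u})"
      by (rule psubset_card_mono[rotated]) (simp add: L_def lowerB_def assms(1))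
    with umin[OF wS] show False by simp
  qed
  define A where "A = L (U {a, b})"
  define Lu where "Lu = L {u}"
  have AP: "A \<subseteq> P" unfolding A_def L_def lowerB_def by auto
  have aA: "a \<in> A" and bA: "b \<in> A" unfolding A_def L_def U_def lowerB_def upperB_def using aP bP by auto
  have zA: "zero \<in> A" unfolding A_def L_def U_def lowerB_def upperB_def using zP bnd by auto
  have ALu: "A \<subseteq> Lu" using uS unfolding A_def Lu_def S_def L_def lowerB_def by auto
  have uLu: "u \<in> Lu" unfolding Lu_def L_def lowerB_def using uP refl by auto
  have ALu_ne: "A \<noteq> Lu"
  proof
    assume "A = Lu"
    with uLu have "u \<in> A" by simp
    then have "is_lub P le {a, b} u" unfolding is_lub_def using uS unfolding A_def L_def S_def U_def lowerB_def by blast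
    with nolub show False by blast
  qed
  have Acar: "A \<in> DM_carrier P le"
    unfolding DM_carrier_def A_def L_def U_def using LUL[of P le "{a, b}"] by (auto simp: lowerB_def)
  have LuLU: "Lu = lowerB P le (upperB P le {u})"
  proof
    show "Lu \<subseteq> lowerB P le (upperB P le {u})"
    proof
      fix x assume "x \<in> Lu"
      then have xP: "x \<in> P" and xu: "le x u" unfolding Lu_def L_def lowerB_def by auto
      have "\<forall>w\<in>upperB P le {u}. le x w"
        using trans[OF xP uP] xu unfolding upperB_def by blast
      then show "x \<in> lowerB P le (upperB P le {u})" using xP unfolding lowerB_def by blast
    qed
    have "u \<in> upperB P le {u}" using uP refl unfolding upperB_def by blast
    then show "lowerB P le (upperB P le {u}) \<subseteq> Lu" unfolding Lu_def L_def lowerB_def by blast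
  qed
  have Lucar: "Lu \<in> DM_carrier P le"
    unfolding DM_carrier_def using LuLU LUL[of P le "{u}"] by (auto simp: lowerB_def)
  have zcar: "{zero} \<in> DM_carrier P le"
  proof -
    have "upperB P le {zero} = P" unfolding upperB_def using bnd by auto
    moreover have "lowerB P le P = {zero}" unfolding lowerB_def using bnd anti zP by auto
    ultimately show ?thesis unfolding DM_carrier_def using zP by auto
  qed
  have meet: "Lu \<inter> DM_comp P le c A \<subseteq> {zero}"
  proof
    fix x assume "x \<in> Lu \<inter> DM_comp P le c A"
    then have xP: "x \<in> P" and xu: "le x u" and xa: "le x (c a)" and xb: "le x (c b)"
      unfolding Lu_def L_def DM_comp_def lowerB_def using aA bA by auto
    obtain j where j: "is_lub P le {x, c u} j"
      using joinex[OF xP cP[OF uP]] xu inv uP by auto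
    have jP: "j \<in> P" and j1: "le x j" and j2: "le (c u) j"
      and jl: "\<And>w. w \<in> P \<Longrightarrow> le x w \<Longrightarrow> le (c u) w \<Longrightarrow> le j w"
      using j unfolding is_lub_def upperB_def by auto
    have "le j (c a)" using jl[OF cP[OF aP] xa] anton[OF aP uP au] by blast
    then have ja: "le a (c j)" using anton2 cP aP jP inv by metis
    have "le j (c b)" using jl[OF cP[OF bP] xb] anton[OF bP uP bu] by blast
    then have jb: "le b (c j)" using anton2 cP bP jP inv by metis
    have cjS: "c j \<in> S" unfolding S_def U_def upperB_def using ja jb cP jP by auto
    have "le (c j) u" using anton[OF cP[OF uP] jP j2] inv uP by simp
    then have "c j = u" using umin2 cjS by blast
    then have "le u (c x)" using anton[OF xP jP j1] by simp
    then have "le x (c u)" using anton2 uP xP by blast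
    then have "x \<in> lowerB P le {u, c u}" unfolding lowerB_def using xP xu by auto
    then show "x \<in> {zero}" using compl uP by simp
  qed
  have zmeet: "zero \<in> Lu \<inter> DM_comp P le c A"
    unfolding Lu_def L_def DM_comp_def lowerB_def using zP bnd uP cP AP by auto
  have compcar: "DM_comp P le c A \<in> DM_carrier P le"
    unfolding DM_carrier_def DM_comp_def using LUL2[of "c ` A" P le] cP AP by (auto simp: lowerB_def)
  have e1: "lub (DM_carrier P le) (\<subseteq>) {Lu, A} = Lu"
    by (rule the_lub_sub) (use Lucar ALu in \<open>auto simp: is_lub_def upperB_def\<close>)
  have e2: "glb (DM_carrier P le) (\<subseteq>) {Lu, DM_comp P le c A} = {zero}"
    by (rule the_glb_sub) (use zcar meet zmeet in \<open>auto simp: is_glb_def lowerB_def\<close>)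
  have e3: "lub (DM_carrier P le) (\<subseteq>) {{zero}, A} = A"
    by (rule the_lub_sub) (use Acar zA in \<open>auto simp: is_lub_def upperB_def\<close>)
  from oml Lucar Acar have
    "lub (DM_carrier P le) (\<subseteq>) {Lu, A} =
     lub (DM_carrier P le) (\<subseteq>) {glb (DM_carrier P le) (\<subseteq>) {lub (DM_carrier P le) (\<subseteq>) {Lu, A}, DM_comp P le c A}, A}"
    unfolding orthomodular_lattice_def by blast
  then have "Lu = A" using e1 e2 e3 by simp
  with ALu_ne show False by simp
qed

end
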